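(* Let $0\le r\le n$, let $A\in\mathcal{A}_{n+1,r+1}$ have block-ends $b_1>\dots>b_{r+1}$, and fix a tiling of $\Gamma(X(A))$. At the termination of the fusion-exchange algorithm applied to $A$, the union of the labels of the horizontal edges of the northwest boundary is $\{b_1+1,\dots,n+1\}$, the union of the labels of the vertical edges of the northwest boundary is $\{1,\dots,b_{r+1}-1\}$, and the union of the labels of the diagonal edges of the northwest boundary is $\{b_{r+1}+1,\dots,b_1\}$.
   Context: Words and diagrams. For $0\le r\le n$ let $B_n^r$ be the set of words $X\in\{H,L,0\}^n$ with exactly $r$ letters $L$. If $X$ has $k$ letters $H$, $r$ letters $L$ and $\ell$ letters $0$, its rhombic diagram $\Gamma(X)$ is the closed region bounded by two paths of unit steps, using the directions west (horizontal), south (vertical) and southwest (diagonal: a fixed unit vector strictly between west and south), both going from a point $P$ to a point $Q$: the northwest boundary consists of $\ell$ west steps, then $r$ southwest steps, then $k$ south steps; the southeast boundary is obtained by reading $X$ left to right and taking a west step for each $0$, a southwest step for each $L$, a south step for each $H$. A tiling of $\Gamma(X)$ is a tiling by unit rhombi of three kinds: squares (horizontal and vertical edges), tall rhombi (vertical and diagonal edges), short rhombi (horizontal and diagonal edges). Each tile has two edges on its lower-right side: its east edge (vertical for squares and tall rhombi, diagonal for short rhombi) and its south edge (horizontal for squares and short rhombi, diagonal for tall rhombi); the parallel edges on its upper-left side are its west and north edges. Assemblées. An assemblée of size $(m,s)$ is a collection of $s$ nonempty, pairwise disjoint, linearly ordered sets (blocks) with union $\{1,\dots,m\}$; the last element of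 a block is its block-end. Blocks are listed in the canonical order with decreasing block-ends, and the assemblée is identified with the concatenated word. $\mathcal{A}_{m,s}$ is the set of these. For $A\in\mathcal{A}_{n+1,r+1}$ with block-ends $b_1>\dots>b_{r+1}$, a non-block-end element $x$ is an increase if $x+1$ appears to the right of $x$ in $A$, and a decrease otherwise (so $n+1$, if not a block-end, is a decrease). $X(A)\in B_n^r$ is obtained from $A$ by deleting its last letter $b_{r+1}$ and replacing each increase by $H$, each decrease by $0$ and each remaining block-end by $L$. Fusion-exchange algorithm. A label is a finite, possibly empty, set of consecutive integers; for labels $E,S$ write $E\succ S$ if both are nonempty and $\min E=\max S+1$. Given $A\in\mathcal{A}_{n+1,r+1}$ and a tiling of $\Gamma(X(A))$: initially the southeast boundary edges, in order from $P$ to $Q$, receive the singleton labels of the letters of $A$ from left to right, $b_{r+1}$ omitted. Step: choose a tile whose east and south edges are labeled, say by $E$ and $S$, and whose west and north edges are not. (R I) If $E\succ S$ and the south edge is horizontal: west edge gets $E\cup S$, north edge gets $\emptyset$, place $\alpha$ in the tile. (R II) If $S\succ E$ and the east edge is vertical: north edge gets $E\cup S$, west edge gets $\emptyset$, place $\beta$. (R III) Otherwise: west edge gets $E$, north edge gets $S$, and place $q$ if $E\ne\emptyset$ and $S\ne\emptyset$. Repeat until every edge is labeled (termination). *)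

theory Defs
  imports Main
begin

datatype letter = H | L | Z  (* Z stands for the letter 0 *)

text \<open>An assemblee of size (m,s) is represented by its list of blocks, each block a
nonempty list (its linear order), listed in canonical order (strictly decreasing
block-ends, the block-end being the last element of the block).  The concatenated
word is concat bs.\<close>

definition assemblees :: "nat \<Rightarrow> nat \<Rightarrow> nat list list set" where
  "assemblees m s = {bs. length bs = s \<and> (\<forall>b\<in>set bs. b \<noteq> []) \<and>
      distinct (concat bs) \<and> set (concat bs) = {1..m} \<and>
      sorted_wrt (>) (map last bs)}"

definition block_ends :: "nat list list \<Rightarrow> nat list" where
  "block_ends bs = map last bs"

definition appears_right_succ :: "nat list \<Rightarrow> nat \<Rightarrow> bool" where
  "appears_right_succ w x \<longleftrightarrow>
     (\<exists>i j. i < j \<and> j < length w \<and> w ! i = x \<and> w ! j = Suc x)"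

definition is_increase :: "nat list list \<Rightarrow> nat \<Rightarrow> bool" where
  "is_increase bs x \<longleftrightarrow> x \<notin> set (block_ends bs) \<and> appears_right_succ (concat bs) x"

definition is_decrease :: "nat list list \<Rightarrow> nat \<Rightarrow> bool" where
  "is_decrease bs x \<longleftrightarrow> x \<notin> set (block_ends bs) \<and> \<not> appears_right_succ (concat bs) x"

definition Xword :: "nat list list \<Rightarrow> letter list" where
  "Xword bs = map (\<lambda>x. if is_increase bs x then H else if is_decrease bs x then Z else L)
                  (butlast (concat bs))"

datatype dir = West | Diag | South   (* horizontal, diagonal (southwest), vertical *)

fun dir_rank :: "dir \<Rightarrow> nat" where
  "dir_rank West = 0" | "dir_rank Diag = 1" | "dir_rank South = 2"

fun dir_of :: "letter \<Rightarrow> dir" where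
  "dir_of Z = West" | "dir_of L = Diag" | "dir_of H = South"

text \<open>Southeast boundary of Gamma(X), as the sequence of step directions from P to Q.\<close>
definition se_boundary :: "letter list \<Rightarrow> dir list" where
  "se_boundary X = map dir_of X"

definition nw_boundary :: "letter list \<Rightarrow> dir list" where
  "nw_boundary X = replicate (count_list X Z) West @ replicate (count_list X L) Diag
                   @ replicate (count_list X H) South"

text \<open>Combinatorial model of a tiling (together with an order of placement of its tiles):
a tile whose east and south edges are consecutive edges i, i+1 of the current path
from P to Q (east edge first) is removed, replacing these two edges by its north and
west edges (north edge first).  Squares: (South,West) to (West,South); tall rhombi:
(South,Diag) to (Diag,South); short rhombi: (Diag,West) to (West,Diag).  Thus a tile
is exactly an adjacent swap of a pair x,y with rank y < rank x.\<close>

fun valid_swaps :: "nat list \<Rightarrow> dir list \<Rightarrow> bool" where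
  "valid_swaps [] w = True"
| "valid_swaps (i # is) w =
     (Suc i < length w \<and> dir_rank (w ! Suc i) < dir_rank (w ! i) \<and>
      valid_swaps is (w[i := w ! Suc i, Suc i := w ! i]))"

fun apply_swaps :: "nat list \<Rightarrow> dir list \<Rightarrow> dir list" where
  "apply_swaps [] w = w"
| "apply_swaps (i # is) w = apply_swaps is (w[i := w ! Suc i, Suc i := w ! i])"

definition is_tiling_order :: "letter list \<Rightarrow> nat list \<Rightarrow> bool" where
  "is_tiling_order X ts \<longleftrightarrow> valid_swaps ts (se_boundary X) \<and>
                            apply_swaps ts (se_boundary X) = nw_boundary X"

type_synonym label = "nat set"

definition label_succ :: "label \<Rightarrow> label \<Rightarrow> bool" (infix "\<succ>\<^sub>l" 50) where
  "E \<succ>\<^sub>l S \<longleftrightarrow> E \<noteq> {} \<and> S \<noteq> {} \<and> Min E = Max S + 1"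

text \<open>Processing the tile at positions i (east edge, label E) and i+1 (south edge,
label S) of the current labelled path; the new path has the north edge at
position i and the west edge at position i+1.\<close>
definition fe_step :: "(dir \<times> label) list \<Rightarrow> nat \<Rightarrow> (dir \<times> label) list" where
  "fe_step st i =
    (let (x, E) = st ! i; (y, S) = st ! Suc i;
         (north, west) =
           (if E \<succ>\<^sub>l S \<and> y = West then ({}, E \<union> S)
            else if S \<succ>\<^sub>l E \<and> x = South then (E \<union> S, {})
            else (S, E))
     in st[i := (y, north), Suc i := (x, west)])"

fun fe_run :: "nat list \<Rightarrow> (dir \<times> label) list \<Rightarrow> (dir \<times> label) list" where
  "fe_run [] st = st"
| "fe_run (i # is) st = fe_run is (fe_step st i)"

definition fe_init :: "nat list list \<Rightarrow> (dir \<times> label) list" where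
  "fe_init bs = zip (se_boundary (Xword bs)) (map (\<lambda>a. {a}) (butlast (concat bs)))"

definition label_union :: "dir \<Rightarrow> (dir \<times> label) list \<Rightarrow> nat set" where
  "label_union d st = \<Union> {E. (d, E) \<in> set st}"

end

theory Submission
  imports Defs
begin


definition ty :: "nat set \<Rightarrow> (nat \<Rightarrow> bool) \<Rightarrow> nat \<Rightarrow> dir" where
  "ty B inc c = (if c \<in> B then Diag else if inc c then South else West)"

definition cvx :: "nat set \<Rightarrow> bool" where
  "cvx A \<longleftrightarrow> (\<forall>x\<in>A. \<forall>z\<in>A. \<forall>y. x \<le> y \<and> y \<le> z \<longrightarrow> y \<in> A)"

abbreviation lab :: "(dir \<times> label) list \<Rightarrow> nat \<Rightarrow> label" where
  "lab st j \<equiv> snd (st ! j)"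

definition finv :: "nat set \<Rightarrow> nat set \<Rightarrow> (nat \<Rightarrow> bool) \<Rightarrow> (dir \<times> label) list \<Rightarrow> bool" where
  "finv U B inc st \<longleftrightarrow> finite U \<and> (\<Union>j\<in>{..<length st}. lab st j) = U
   \<and> (\<forall>j<length st. \<forall>k<length st. j \<noteq> k \<longrightarrow> lab st j \<inter> lab st k = {})
   \<and> (\<forall>j<length st. cvx (lab st j))
   \<and> (\<forall>j<length st. lab st j \<noteq> {} \<longrightarrow> fst (st ! j) = ty B inc (Max (lab st j)))
   \<and> (\<forall>j<length st. \<forall>b\<in>lab st j. b \<in> B \<longrightarrow> b = Max (lab st j))
   \<and> (\<forall>j<length st. \<forall>k<length st. \<forall>c. j \<noteq> k \<longrightarrow> c \<in> lab st j \<longrightarrow> Suc c \<in> lab st k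
        \<longrightarrow> c \<notin> B \<longrightarrow> (j < k \<longleftrightarrow> inc c))"

lemma cvx_max: "cvx A \<Longrightarrow> finite A \<Longrightarrow> c \<in> A \<Longrightarrow> Suc c \<notin> A \<Longrightarrow> c = Max A"
proof -
  assume a: "cvx A" "finite A" "c \<in> A" "Suc c \<notin> A"
  have "\<forall>e\<in>A. e \<le> c"
  proof
    fix e assume "e \<in> A"
    show "e \<le> c"
    proof (rule ccontr)
      assume "\<not> e \<le> c"
      then have "c \<le> Suc c \<and> Suc c \<le> e" by simp
      then have "Suc c \<in> A" using a(1,3) `e \<in> A` unfolding cvx_def by blast
      then show False using a by simp
    qed
  qed
  then show ?thesis using a by (intro Max_eqI[symmetric]) auto
qed

lemma cvx_min: "cvx A \<Longrightarrow> finite A \<Longrightarrow> Suc c \<in> A \<Longrightarrow> c \<notin> A \<Longrightarrow> Suc c = Min A"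
proof -
  assume a: "cvx A" "finite A" "Suc c \<in> A" "c \<notin> A"
  have "\<forall>e\<in>A. Suc c \<le> e"
  proof
    fix e assume "e \<in> A"
    show "Suc c \<le> e"
    proof (rule ccontr)
      assume "\<not> Suc c \<le> e"
      then have "e \<le> c \<and> c \<le> Suc c" by simp
      then have "c \<in> A" using a(1,3) `e \<in> A` unfolding cvx_def by blast
      then show False using a by simp
    qed
  qed
  then show ?thesis using a by (intro Min_eqI[symmetric]) auto
qed

lemma succ_max:
  assumes "E \<succ>\<^sub>l S" "finite E" "finite S"
  shows "Max (E \<union> S) = Max E"
proof -
  have ne: "E \<noteq> {}" "S \<noteq> {}" and m: "Min E = Max S + 1" using assms unfolding label_succ_def by auto
  have "\<forall>s\<in>S. s < Min E"
  proof
    fix s assume "s \<in> S"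
    then have "s \<le> Max S" using assms(3) by simp
    then show "s < Min E" using m by simp
  qed
  moreover have "Min E \<le> Max E" using ne assms by simp
  moreover have "Max S \<in> S" using ne assms by simp
  ultimately have "Max S \<le> Max E" by fastforce
  moreover have "Max (E \<union> S) = max (Max E) (Max S)" using ne assms by (intro Max_Un)
  ultimately show ?thesis by linarith
qed

lemma succ_cvx:
  assumes "E \<succ>\<^sub>l S" "finite E" "finite S" "cvx E" "cvx S"
  shows "cvx (E \<union> S)"
proof -
  have ne: "E \<noteq> {}" "S \<noteq> {}" and m: "Min E = Max S + 1" using assms unfolding label_succ_def by auto
  have sS: "\<forall>s\<in>S. s \<le> Max S" using assms by simp
  have eE: "\<forall>e\<in>E. Min E \<le> e" using assms by simp
  have mS: "Max S \<in> S" and mE: "Min E \<in> E" using ne assms by auto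
  show ?thesis unfolding cvx_def
  proof (intro ballI allI impI)
    fix x z y assume xz: "x \<in> E \<union> S" "z \<in> E \<union> S" and y: "x \<le> y \<and> y \<le> z"
    show "y \<in> E \<union> S"
    proof (cases "y \<le> Max S")
      case True
      then have "x \<in> S" using xz y eE m by fastforce
      then show ?thesis using assms(5) mS True y unfolding cvx_def by blast
    next
      case False
      then have "z \<in> E" using xz y sS m by fastforce
      moreover have "Min E \<le> y" using False m by simp
      ultimately show ?thesis using assms(4) mE y unfolding cvx_def by blast
    qed
  qed
qed

lemma invD:
  assumes "finv U B inc st"
  shows "finite U" "(\<Union>j\<in>{..<length st}. lab st j) = U"
    "\<And>j k. j < length st \<Longrightarrow> k < length st \<Longrightarrow> j \<noteq> k \<Longrightarrow> lab st j \<inter> lab st k = {}"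
    "\<And>j. j < length st \<Longrightarrow> cvx (lab st j)"
    "\<And>j. j < length st \<Longrightarrow> lab st j \<noteq> {} \<Longrightarrow> fst (st ! j) = ty B inc (Max (lab st j))"
    "\<And>j b. j < length st \<Longrightarrow> b \<in> lab st j \<Longrightarrow> b \<in> B \<Longrightarrow> b = Max (lab st j)"
    "\<And>j k c. j < length st \<Longrightarrow> k < length st \<Longrightarrow> j \<noteq> k \<Longrightarrow> c \<in> lab st j \<Longrightarrow> Suc c \<in> lab st k
        \<Longrightarrow> c \<notin> B \<Longrightarrow> (j < k \<longleftrightarrow> inc c)"
  using assms by (simp_all add: finv_def)

lemma invI:
  assumes "finite U" "(\<Union>j\<in>{..<length st}. lab st j) = U"
    "\<And>j k. j < length st \<Longrightarrow> k < length st \<Longrightarrow> j \<noteq> k \<Longrightarrow> lab st j \<inter> lab st k = {}"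
    "\<And>j. j < length st \<Longrightarrow> cvx (lab st j)"
    "\<And>j. j < length st \<Longrightarrow> lab st j \<noteq> {} \<Longrightarrow> fst (st ! j) = ty B inc (Max (lab st j))"
    "\<And>j b. j < length st \<Longrightarrow> b \<in> lab st j \<Longrightarrow> b \<in> B \<Longrightarrow> b = Max (lab st j)"
    "\<And>j k c. j < length st \<Longrightarrow> k < length st \<Longrightarrow> j \<noteq> k \<Longrightarrow> c \<in> lab st j \<Longrightarrow> Suc c \<in> lab st k
        \<Longrightarrow> c \<notin> B \<Longrightarrow> (j < k \<longleftrightarrow> inc c)"
  shows "finv U B inc st"
  unfolding finv_def using assms by (intro conjI allI impI ballI) simp_all

lemma inv_fin: "finv U B inc st \<Longrightarrow> j < length st \<Longrightarrow> finite (lab st j)"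
proof -
  assume a: "finv U B inc st" "j < length st"
  have "lab st j \<subseteq> U" using invD(2)[OF a(1)] a(2) by blast
  then show ?thesis using invD(1)[OF a(1)] finite_subset by blast
qed

lemma step3:
  assumes I: "finv U B inc st" and i: "Suc i < length st"
    and xi: "st ! i = (x,E)" and yi: "st ! Suc i = (y,S)"
    and n1: "\<not> (E \<succ>\<^sub>l S \<and> y = West)" and n2: "\<not> (S \<succ>\<^sub>l E \<and> x = South)"
  shows "finv U B inc (st[i := (y,S), Suc i := (x,E)])"
proof -
  define st' where "st' = st[i := (y,S), Suc i := (x,E)]"
  define \<sigma> where "\<sigma> j = (if j = i then Suc i else if j = Suc i then i else j)" for j
  have len: "length st' = length st" unfolding st'_def by simp
  have nth: "st' ! j = st ! (\<sigma> j)" if "j < length st" for j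
    using that i xi yi unfolding st'_def \<sigma>_def by (auto simp: nth_list_update)
  have sr: "\<sigma> j < length st" if "j < length st" for j using that i unfolding \<sigma>_def by auto
  have ss: "\<sigma> (\<sigma> j) = j" for j unfolding \<sigma>_def by auto
  have si: "\<sigma> j \<noteq> \<sigma> k" if "j \<noteq> k" for j k using that unfolding \<sigma>_def by auto
  have so: "\<sigma> j < \<sigma> k \<longleftrightarrow> j < k" if "j \<noteq> k" "\<not> (j = i \<and> k = Suc i)" "\<not> (j = Suc i \<and> k = i)" for j k
    using that unfolding \<sigma>_def by auto
  have E: "E = lab st i" and S: "S = lab st (Suc i)" using xi yi by auto
  have i0: "i < length st" using i by simp
  have fE: "finite E" using inv_fin[OF I i0] E by simp
  have fS: "finite S" using inv_fin[OF I i] S by simp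
  have cvE: "cvx E" using invD(4)[OF I i0] E by simp
  have cvS: "cvx S" using invD(4)[OF I i] S by simp
  have dES: "E \<inter> S = {}" using invD(3)[OF I i0 i] E S by simp
  have "finv U B inc st'"
  proof (rule invI)
    show "finite U" using invD(1)[OF I] .
    show "(\<Union>j\<in>{..<length st'}. lab st' j) = U"
    proof -
      have "(\<Union>j\<in>{..<length st'}. lab st' j) = (\<Union>j\<in>{..<length st}. lab st j)"
      proof (rule set_eqI, rule iffI)
        fix v assume "v \<in> (\<Union>j\<in>{..<length st'}. lab st' j)"
        then obtain j where j: "j < length st" "v \<in> lab st' j" using len by auto
        then have "v \<in> lab st (\<sigma> j)" using nth[OF j(1)] by simp
        then show "v \<in> (\<Union>j\<in>{..<length st}. lab st j)" using sr[OF j(1)] by blast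
      next
        fix v assume "v \<in> (\<Union>j\<in>{..<length st}. lab st j)"
        then obtain j where j: "j < length st" "v \<in> lab st j" by auto
        then have "v \<in> lab st' (\<sigma> j)" using nth[OF sr[OF j(1)]] ss by simp
        then show "v \<in> (\<Union>j\<in>{..<length st'}. lab st' j)" using sr[OF j(1)] len by auto
      qed
      then show ?thesis using invD(2)[OF I] by simp
    qed
    show "lab st' j \<inter> lab st' k = {}" if "j < length st'" "k < length st'" "j \<noteq> k" for j k
    proof -
      have "j < length st" "k < length st" using that len by auto
      then show ?thesis using nth invD(3)[OF I, of "\<sigma> j" "\<sigma> k"] sr si that(3) by simp
    qed
    show "cvx (lab st' j)" if "j < length st'" for j
    proof -
      have "j < length st" using that len by auto
      then show ?thesis using nth invD(4)[OF I, of "\<sigma> j"] sr by simp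
    qed
    show "fst (st' ! j) = ty B inc (Max (lab st' j))" if "j < length st'" "lab st' j \<noteq> {}" for j
    proof -
      have "j < length st" using that len by auto
      then show ?thesis using nth invD(5)[OF I, of "\<sigma> j"] sr that by simp
    qed
    show "b = Max (lab st' j)" if "j < length st'" "b \<in> lab st' j" "b \<in> B" for j b
    proof -
      have "j < length st" using that len by auto
      then show ?thesis using nth invD(6)[OF I, of "\<sigma> j"] sr that by simp
    qed
    show "(j < k \<longleftrightarrow> inc c)" if jk: "j < length st'" "k < length st'" "j \<noteq> k" and
      c: "c \<in> lab st' j" "Suc c \<in> lab st' k" "c \<notin> B" for j k c
    proof -
      have jl: "j < length st" and kl: "k < length st" using jk len by auto
      have c1: "c \<in> lab st (\<sigma> j)" using c(1) nth[OF jl] by simp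
      have c2: "Suc c \<in> lab st (\<sigma> k)" using c(2) nth[OF kl] by simp
      have old: "\<sigma> j < \<sigma> k \<longleftrightarrow> inc c" by (rule invD(7)[OF I sr[OF jl] sr[OF kl] si[OF jk(3)] c1 c2 c(3)])
      show ?thesis
      proof (cases "j = i \<and> k = Suc i")
        case True
        then have cS: "c \<in> S" and cE: "Suc c \<in> E" using c1 c2 E S unfolding \<sigma>_def by simp_all
        have ninc: "\<not> inc c" using old True unfolding \<sigma>_def by simp
        have m: "c = Max S" using cvx_max[OF cvS fS cS] cE dES by blast
        have m2: "Suc c = Min E" using cvx_min[OF cvE fE cE] cS dES by blast
        have "E \<succ>\<^sub>l S" unfolding label_succ_def using m m2 cS cE by auto
        moreover have "y = West" using invD(5)[OF I, of "Suc i"] i yi m cS c(3) ninc unfolding ty_def by auto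
        ultimately show ?thesis using n1 by blast
      next
        case F1: False
        show ?thesis
        proof (cases "j = Suc i \<and> k = i")
          case True
          then have cE: "c \<in> E" and cS: "Suc c \<in> S" using c1 c2 E S unfolding \<sigma>_def by simp_all
          have yinc: "inc c" using old True unfolding \<sigma>_def by simp
          have m: "c = Max E" using cvx_max[OF cvE fE cE] cS dES by blast
          have m2: "Suc c = Min S" using cvx_min[OF cvS fS cS] cE dES by blast
          have "S \<succ>\<^sub>l E" unfolding label_succ_def using m m2 cS cE by auto
          moreover have "x = South" using invD(5)[OF I, of i] i xi m cE c(3) yinc unfolding ty_def by auto
          ultimately show ?thesis using n2 by blast
        next
          case False
          then show ?thesis using so[of j k] F1 jk old by blast
        qed
      qed
    qed
  qed
  then show ?thesis unfolding st'_def .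
qed

lemma merge:
  assumes I: "finv U B inc st" and i: "Suc i < length st"
    and pq: "(p = i \<and> q = Suc i) \<or> (p = Suc i \<and> q = i)"
    and cv: "cvx (lab st i \<union> lab st (Suc i))"
    and dr: "lab st i \<union> lab st (Suc i) \<noteq> {} \<Longrightarrow> d = ty B inc (Max (lab st i \<union> lab st (Suc i)))"
    and be: "\<And>b. b \<in> lab st i \<union> lab st (Suc i) \<Longrightarrow> b \<in> B \<Longrightarrow> b = Max (lab st i \<union> lab st (Suc i))"
  shows "finv U B inc (st[p := (d, lab st i \<union> lab st (Suc i)), q := (d', {})])"
proof -
  define M where "M = lab st i \<union> lab st (Suc i)"
  define st' where "st' = st[p := (d, M), q := (d', {})]"
  have i0: "i < length st" using i by simp
  have pl: "p < length st" and ql: "q < length st" and pnq: "p \<noteq> q" using pq i by auto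
  have len: "length st' = length st" unfolding st'_def by simp
  have labn: "lab st' j = (if j = q then {} else if j = p then M else lab st j)" for j
    unfolding st'_def using pl ql pnq by (simp add: nth_list_update)
  have fstn: "fst (st' ! j) = (if j = q then d' else if j = p then d else fst (st ! j))" for j
    unfolding st'_def using pl ql pnq by (simp add: nth_list_update)
  have key: "(p < k \<longleftrightarrow> i < k) \<and> (p < k \<longleftrightarrow> Suc i < k) \<and> (k < p \<longleftrightarrow> k < i) \<and> (k < p \<longleftrightarrow> k < Suc i)"
    if "k \<noteq> i" "k \<noteq> Suc i" for k using pq that by auto
  have pi: "p = i \<or> p = Suc i" and qi: "q = i \<or> q = Suc i" using pq by auto
  have "finv U B inc st'"
  proof (rule invI)
    show "finite U" using invD(1)[OF I] .
    show "(\<Union>j\<in>{..<length st'}. lab st' j) = U"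
    proof -
      have "(\<Union>j\<in>{..<length st'}. lab st' j) = (\<Union>j\<in>{..<length st}. lab st j)"
      proof (rule set_eqI, rule iffI)
        fix v assume "v \<in> (\<Union>j\<in>{..<length st'}. lab st' j)"
        then obtain j where j: "j < length st" "v \<in> lab st' j" using len by auto
        show "v \<in> (\<Union>j\<in>{..<length st}. lab st j)"
        proof (cases "j = q")
          case True then show ?thesis using j labn by simp
        next
          case F: False
          show ?thesis
          proof (cases "j = p")
            case True
            then have "v \<in> lab st i \<or> v \<in> lab st (Suc i)" using j labn F M_def by simp
            then show ?thesis using i0 i by blast
          next
            case False then show ?thesis using j labn F by auto
          qed
        qed
      next
        fix v assume "v \<in> (\<Union>j\<in>{..<length st}. lab st j)"
        then obtain j where j: "j < length st" "v \<in> lab st j" by auto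
        show "v \<in> (\<Union>j\<in>{..<length st'}. lab st' j)"
        proof (cases "j = i \<or> j = Suc i")
          case True
          then have "v \<in> lab st' p" using labn pnq j(2) M_def by auto
          then show ?thesis using pl len by auto
        next
          case False
          then have "v \<in> lab st' j" using labn pi qi j(2) by auto
          then show ?thesis using j(1) len by auto
        qed
      qed
      then show ?thesis using invD(2)[OF I] by simp
    qed
    show "lab st' j \<inter> lab st' k = {}" if jk: "j < length st'" "k < length st'" "j \<noteq> k" for j k
    proof -
      have jl: "j < length st" and kl: "k < length st" using jk len by auto
      show ?thesis
      proof (cases "j = q \<or> k = q")
        case True then show ?thesis using labn by auto
      next
        case F: False
        show ?thesis
        proof (cases "j = p")
          case True
          then have "k \<noteq> i" "k \<noteq> Suc i" using pi qi F jk(3) pq by auto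
          then have "lab st i \<inter> lab st k = {}" "lab st (Suc i) \<inter> lab st k = {}"
            using invD(3)[OF I i0 kl] invD(3)[OF I i kl] by auto
          moreover have "lab st' k = lab st k" using labn F True jk(3) by auto
          moreover have "lab st' j = M" using labn F True by auto
          ultimately show ?thesis using M_def by auto
        next
          case F2: False
          show ?thesis
          proof (cases "k = p")
            case True
            then have "j \<noteq> i" "j \<noteq> Suc i" using pi qi F jk(3) pq by auto
            then have "lab st i \<inter> lab st j = {}" "lab st (Suc i) \<inter> lab st j = {}"
              using invD(3)[OF I i0 jl] invD(3)[OF I i jl] by auto
            moreover have "lab st' j = lab st j" using labn F F2 by auto
            moreover have "lab st' k = M" using labn F True by auto
            ultimately show ?thesis using M_def by auto
          next
            case False
            then show ?thesis using labn F F2 invD(3)[OF I jl kl jk(3)] by simp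
          qed
        qed
      qed
    qed
    show "cvx (lab st' j)" if "j < length st'" for j
    proof -
      have "cvx {}" unfolding cvx_def by simp
      then show ?thesis using labn invD(4)[OF I] that len cv M_def by simp
    qed
    show "fst (st' ! j) = ty B inc (Max (lab st' j))" if "j < length st'" "lab st' j \<noteq> {}" for j
      using labn fstn invD(5)[OF I] that len dr M_def by (cases "j = q"; cases "j = p"; simp)
    show "b = Max (lab st' j)" if "j < length st'" "b \<in> lab st' j" "b \<in> B" for j b
      using labn invD(6)[OF I] that len be M_def by (cases "j = q"; cases "j = p"; simp)
    show "(j < k \<longleftrightarrow> inc c)" if jk: "j < length st'" "k < length st'" "j \<noteq> k" and
      c: "c \<in> lab st' j" "Suc c \<in> lab st' k" "c \<notin> B" for j k c
    proof -
      have jl: "j < length st" and kl: "k < length st" using jk len by auto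
      have jq: "j \<noteq> q" and kq: "k \<noteq> q" using c labn by auto
      show ?thesis
      proof (cases "j = p")
        case True
        then have kk: "k \<noteq> i" "k \<noteq> Suc i" using pi qi kq jk(3) pq by auto
        have ck: "Suc c \<in> lab st k" using c(2) labn kk pi qi by auto
        have "c \<in> lab st i \<or> c \<in> lab st (Suc i)" using c(1) labn True jq M_def by simp
        then show ?thesis
        proof
          assume "c \<in> lab st i"
          then have "i < k \<longleftrightarrow> inc c" using invD(7)[OF I i0 kl _ _ ck c(3)] kk by blast
          then show ?thesis using key[OF kk] True by blast
        next
          assume "c \<in> lab st (Suc i)"
          then have "Suc i < k \<longleftrightarrow> inc c" using invD(7)[OF I i kl _ _ ck c(3)] kk by blast
          then show ?thesis using key[OF kk] True by blast
        qed
      next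
        case F: False
        show ?thesis
        proof (cases "k = p")
          case True
          then have kk: "j \<noteq> i" "j \<noteq> Suc i" using pi qi jq jk(3) pq by auto
          have cj: "c \<in> lab st j" using c(1) labn kk pi qi by auto
          have "Suc c \<in> lab st i \<or> Suc c \<in> lab st (Suc i)" using c(2) labn True kq M_def by simp
          then show ?thesis
          proof
            assume "Suc c \<in> lab st i"
            then have "j < i \<longleftrightarrow> inc c" using invD(7)[OF I jl i0 _ cj _ c(3)] kk by blast
            then show ?thesis using key[OF kk] True by blast
          next
            assume "Suc c \<in> lab st (Suc i)"
            then have "j < Suc i \<longleftrightarrow> inc c" using invD(7)[OF I jl i _ cj _ c(3)] kk by blast
            then show ?thesis using key[OF kk] True by blast
          qed
        next
          case False
          have "c \<in> lab st j" "Suc c \<in> lab st k" using c labn F False jq kq by auto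
          then show ?thesis using invD(7)[OF I jl kl jk(3) _ _ c(3)] by blast
        qed
      qed
    qed
  qed
  then show ?thesis unfolding st'_def M_def .
qed

lemma fe_step_eq:
  assumes xi: "st ! i = (x,E)" and yi: "st ! Suc i = (y,S)"
  shows "fe_step st i = (if E \<succ>\<^sub>l S \<and> y = West then st[i := (y,{}), Suc i := (x, E \<union> S)]
     else if S \<succ>\<^sub>l E \<and> x = South then st[i := (y, E \<union> S), Suc i := (x,{})]
     else st[i := (y,S), Suc i := (x,E)])"
  unfolding fe_step_def using xi yi by simp

lemma step_inv:
  assumes I: "finv U B inc st" and i: "Suc i < length st"
  shows "finv U B inc (fe_step st i)"
proof -
  obtain x E where xi: "st ! i = (x,E)" by (cases "st ! i")
  obtain y S where yi: "st ! Suc i = (y,S)" by (cases "st ! Suc i")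
  have i0: "i < length st" using i by simp
  have E: "E = lab st i" and S: "S = lab st (Suc i)" using xi yi by auto
  have fE: "finite E" using inv_fin[OF I i0] E by simp
  have fS: "finite S" using inv_fin[OF I i] S by simp
  have cvE: "cvx E" using invD(4)[OF I i0] E by simp
  have cvS: "cvx S" using invD(4)[OF I i] S by simp
  have dx: "E \<noteq> {} \<Longrightarrow> x = ty B inc (Max E)" using invD(5)[OF I i0] xi by simp
  have dy: "S \<noteq> {} \<Longrightarrow> y = ty B inc (Max S)" using invD(5)[OF I i] yi by simp
  have bE: "\<And>b. b \<in> E \<Longrightarrow> b \<in> B \<Longrightarrow> b = Max E" using invD(6)[OF I i0] xi by simp
  have bS: "\<And>b. b \<in> S \<Longrightarrow> b \<in> B \<Longrightarrow> b = Max S" using invD(6)[OF I i] yi by simp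
  show ?thesis
  proof (cases "E \<succ>\<^sub>l S \<and> y = West")
    case R1: True
    have ne: "E \<noteq> {}" "S \<noteq> {}" using R1 unfolding label_succ_def by auto
    have mx: "Max (E \<union> S) = Max E" using succ_max[OF _ fE fS] R1 by blast
    have eq: "fe_step st i = st[Suc i := (x, lab st i \<union> lab st (Suc i)), i := (y, {})]"
      using fe_step_eq[OF xi yi] R1 E S by (simp add: list_update_swap)
    have "finv U B inc (st[Suc i := (x, lab st i \<union> lab st (Suc i)), i := (y, {})])"
    proof (rule merge[OF I i])
      show "cvx (lab st i \<union> lab st (Suc i))" using succ_cvx[OF _ fE fS cvE cvS] R1 E S by blast
      show "x = ty B inc (Max (lab st i \<union> lab st (Suc i)))" using mx dx ne E S by simp
      show "b = Max (lab st i \<union> lab st (Suc i))" if "b \<in> lab st i \<union> lab st (Suc i)" "b \<in> B" for b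
      proof -
        have "b \<in> E \<or> b \<in> S" using that E S by simp
        then show ?thesis
        proof
          assume "b \<in> E" then show ?thesis using bE that(2) mx E S by simp
        next
          assume "b \<in> S"
          then have "b = Max S" using bS that(2) by simp
          then have "y = Diag" using dy ne that(2) unfolding ty_def by simp
          then show ?thesis using R1 by simp
        qed
      qed
    qed simp
    then show ?thesis using eq by simp
  next
    case N1: False
    show ?thesis
    proof (cases "S \<succ>\<^sub>l E \<and> x = South")
      case R2: True
      have ne: "E \<noteq> {}" "S \<noteq> {}" using R2 unfolding label_succ_def by auto
      have mx: "Max (E \<union> S) = Max S" using succ_max[OF _ fS fE] R2 by (simp add: Un_commute)
      have eq0: "fe_step st i = st[i := (y, E \<union> S), Suc i := (x, {})]"
        using fe_step_eq[OF xi yi] R2 N1 by simp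
      have eq: "fe_step st i = st[i := (y, lab st i \<union> lab st (Suc i)), Suc i := (x, {})]"
        using eq0 E S by simp
      have "finv U B inc (st[i := (y, lab st i \<union> lab st (Suc i)), Suc i := (x, {})])"
      proof (rule merge[OF I i])
        have "cvx (S \<union> E)" using succ_cvx[OF _ fS fE cvS cvE] R2 by blast
        then show "cvx (lab st i \<union> lab st (Suc i))" using E S by (simp add: Un_commute)
        show "y = ty B inc (Max (lab st i \<union> lab st (Suc i)))" using mx dy ne E S by simp
        show "b = Max (lab st i \<union> lab st (Suc i))" if "b \<in> lab st i \<union> lab st (Suc i)" "b \<in> B" for b
        proof -
          have "b \<in> E \<or> b \<in> S" using that E S by simp
          then show ?thesis
          proof
            assume "b \<in> S" then show ?thesis using bS that(2) mx E S by simp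
          next
            assume "b \<in> E"
            then have "b = Max E" using bE that(2) by simp
            then have "x = Diag" using dx ne that(2) unfolding ty_def by simp
            then show ?thesis using R2 by simp
          qed
        qed
      qed simp
      then show ?thesis using eq by simp
    next
      case N2: False
      have eq: "fe_step st i = st[i := (y,S), Suc i := (x,E)]"
        using fe_step_eq[OF xi yi] N1 N2 by simp
      show ?thesis unfolding eq by (rule step3[OF I i xi yi N1 N2])
    qed
  qed
qed

lemma step_fst:
  assumes i: "Suc i < length st"
  shows "map fst (fe_step st i) = (map fst st)[i := map fst st ! Suc i, Suc i := map fst st ! i]"
proof -
  obtain x E where xi: "st ! i = (x,E)" by (cases "st ! i")
  obtain y S where yi: "st ! Suc i = (y,S)" by (cases "st ! Suc i")
  show ?thesis using fe_step_eq[OF xi yi] xi yi i by (simp add: map_update)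
qed

lemma step_len: "length (fe_step st i) = length st"
proof -
  obtain x E where xi: "st ! i = (x,E)" by (cases "st ! i")
  obtain y S where yi: "st ! Suc i = (y,S)" by (cases "st ! Suc i")
  show ?thesis using fe_step_eq[OF xi yi] by simp
qed

lemma run_inv:
  "finv U B inc st \<Longrightarrow> valid_swaps ts (map fst st) \<Longrightarrow>
     finv U B inc (fe_run ts st) \<and> map fst (fe_run ts st) = apply_swaps ts (map fst st)"
proof (induction ts arbitrary: st)
  case Nil
  then show ?case by simp
next
  case (Cons i ts)
  have i: "Suc i < length st" using Cons.prems(2) by simp
  have i0: "i < length st" using i by simp
  have v: "valid_swaps ts (map fst (fe_step st i))" using Cons.prems(2) step_fst[OF i] i i0 by simp
  have "finv U B inc (fe_step st i)" using step_inv[OF Cons.prems(1) i] .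
  from Cons.IH[OF this v] show ?case using step_fst[OF i] by simp
qed



lemma lu: "v \<in> label_union d st \<longleftrightarrow> (\<exists>j<length st. fst (st ! j) = d \<and> v \<in> lab st j)"
proof
  assume "v \<in> label_union d st"
  then obtain E where "(d, E) \<in> set st" "v \<in> E" unfolding label_union_def by auto
  then obtain j where "j < length st" "st ! j = (d, E)" by (auto simp: in_set_conv_nth)
  then show "\<exists>j<length st. fst (st ! j) = d \<and> v \<in> lab st j" using \<open>v \<in> E\<close> by force
next
  assume "\<exists>j<length st. fst (st ! j) = d \<and> v \<in> lab st j"
  then obtain j where j: "j < length st" "fst (st ! j) = d" "v \<in> lab st j" by blast
  then have "(d, lab st j) \<in> set st" by (metis nth_mem prod.collapse)
  then show "v \<in> label_union d st" unfolding label_union_def using j(3) by blast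
qed

lemma luD: "v \<in> label_union d st \<Longrightarrow> \<exists>j<length st. fst (st ! j) = d \<and> v \<in> lab st j"
  using lu by blast

lemma luI: "j < length st \<Longrightarrow> fst (st ! j) = d \<Longrightarrow> v \<in> lab st j \<Longrightarrow> v \<in> label_union d st"
  using lu by blast

lemma ty_cases: "ty B inc c = Diag \<longleftrightarrow> c \<in> B" "ty B inc c = South \<longleftrightarrow> c \<notin> B \<and> inc c"
  "ty B inc c = West \<longleftrightarrow> c \<notin> B \<and> \<not> inc c"
  unfolding ty_def by auto

lemma final:
  assumes I: "finv U B inc st"
    and U: "U = {1..N} - {bl}"
    and sW: "\<And>j k. j < length st \<Longrightarrow> k \<le> j \<Longrightarrow> fst (st ! j) = West \<Longrightarrow> fst (st ! k) = West"
    and sS: "\<And>j k. k < length st \<Longrightarrow> j \<le> k \<Longrightarrow> fst (st ! j) = South \<Longrightarrow> fst (st ! k) = South"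
    and Bb: "\<And>b. b \<in> B \<Longrightarrow> bl \<le> b \<and> b \<le> b1" and b1B: "b1 \<in> B" and b1N: "b1 \<le> N"
    and incN: "\<And>c. inc c \<Longrightarrow> Suc c \<le> N"
    and incl: "\<And>c. c \<in> U \<Longrightarrow> Suc c = bl \<Longrightarrow> inc c"
  shows "label_union West st = {b1+1..N} \<and> label_union South st = {1..<bl} \<and> label_union Diag st = {bl+1..b1}"
proof -
  have Uiff: "v \<in> U \<longleftrightarrow> 1 \<le> v \<and> v \<le> N \<and> v \<noteq> bl" for v using U by auto
  have un: "(\<Union>j\<in>{..<length st}. lab st j) = U" by (rule invD(2)[OF I])
  have inU: "v \<in> U" if "j < length st" "v \<in> lab st j" for j v using un that by blast
  have fromU: "\<exists>j<length st. v \<in> lab st j" if "v \<in> U" for v using un that by blast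
  have mx: "fst (st ! j) = ty B inc u" if "j < length st" "u \<in> lab st j" "Suc u \<notin> lab st j" for j u
  proof -
    have "u = Max (lab st j)" using cvx_max[OF invD(4)[OF I that(1)] inv_fin[OF I that(1)] that(2,3)] .
    then show ?thesis using invD(5)[OF I that(1)] that(2) by auto
  qed
  have W1: "b1 < v" if "v \<in> label_union West st" for v
  proof (rule ccontr)
    assume "\<not> b1 < v"
    then have vb: "v \<le> b1" by simp
    have step: "v + k \<in> label_union West st" if "v + k \<le> b1" for k
      using that
    proof (induction k)
      case 0 then show ?case using \<open>v \<in> label_union West st\<close> by simp
    next
      case (Suc k)
      then have "v + k \<in> label_union West st" by simp
      then obtain j where j: "j < length st" "fst (st ! j) = West" "v + k \<in> lab st j" using luD by blast
      show ?case
      proof (cases "Suc (v + k) \<in> lab st j")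
        case True then show ?thesis using luI[OF j(1) j(2)] by simp
      next
        case False
        then have "ty B inc (v + k) = West" using mx[OF j(1) j(3)] j(2) by simp
        then have nb: "v + k \<notin> B" "\<not> inc (v + k)" using ty_cases by auto
        have uU: "v + k \<in> U" using inU j by blast
        have "Suc (v + k) \<noteq> bl" using incl[OF uU] nb by blast
        then have "Suc (v + k) \<in> U" using Uiff Suc.prems b1N by simp
        then obtain k' where k': "k' < length st" "Suc (v + k) \<in> lab st k'" using fromU by blast
        have "k' \<noteq> j" using k' False by auto
        then have "\<not> j < k'" using invD(7)[OF I j(1) k'(1) _ j(3) k'(2) nb(1)] nb(2) by blast
        then have "fst (st ! k') = West" using sW[OF j(1) _ j(2)] by simp
        then show ?thesis using luI[OF k'(1) _ k'(2)] by simp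
      qed
    qed
    have "b1 \<in> label_union West st" using step[of "b1 - v"] vb by simp
    then obtain j where j: "j < length st" "fst (st ! j) = West" "b1 \<in> lab st j" using luD by blast
    have bm: "b1 = Max (lab st j)" using invD(6)[OF I j(1) j(3) b1B] .
    have ne: "lab st j \<noteq> {}" using j(3) by blast
    have "fst (st ! j) = ty B inc (Max (lab st j))" by (rule invD(5)[OF I j(1) ne])
    then have "fst (st ! j) = ty B inc b1" by (subst bm)
    moreover have "ty B inc b1 = Diag" using b1B unfolding ty_def by simp
    ultimately have "fst (st ! j) = Diag" by simp
    then show False using j(2) by simp
  qed
  have S1: "v < bl" if vS: "v \<in> label_union South st" for v
  proof (rule ccontr)
    assume "\<not> v < bl"
    obtain j0 where "j0 < length st" "v \<in> lab st j0" using luD[OF vS] by blast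
    then have vU: "v \<in> U" using inU by blast
    then have vb: "bl < v" "1 \<le> v" using \<open>\<not> v < bl\<close> Uiff by auto
    have step: "v + k \<in> label_union South st" for k
    proof (induction k)
      case 0 then show ?case using vS by simp
    next
      case (Suc k)
      then obtain j where j: "j < length st" "fst (st ! j) = South" "v + k \<in> lab st j" using luD by blast
      show ?case
      proof (cases "Suc (v + k) \<in> lab st j")
        case True then show ?thesis using luI[OF j(1) j(2)] by simp
      next
        case False
        then have "ty B inc (v + k) = South" using mx[OF j(1) j(3)] j(2) by simp
        then have nb: "v + k \<notin> B" "inc (v + k)" using ty_cases by auto
        have "Suc (v + k) \<le> N" using incN nb(2) by blast
        then have "Suc (v + k) \<in> U" using Uiff vb by simp
        then obtain k' where k': "k' < length st" "Suc (v + k) \<in> lab st k'" using fromU by blast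
        have "k' \<noteq> j" using k' False by auto
        then have "j < k'" using invD(7)[OF I j(1) k'(1) _ j(3) k'(2) nb(1)] nb(2) by blast
        then have "fst (st ! k') = South" using sS[OF k'(1) _ j(2)] by simp
        then show ?thesis using luI[OF k'(1) _ k'(2)] by simp
      qed
    qed
    obtain j where "j < length st" "v + N \<in> lab st j" using luD[OF step[of N]] by blast
    then have "v + N \<in> U" using inU by blast
    then show False using Uiff vb by simp
  qed
  have D1: "bl < v \<and> v \<le> b1" if vS: "v \<in> label_union Diag st" for v
  proof -
    obtain j where j: "j < length st" "fst (st ! j) = Diag" "v \<in> lab st j" using luD[OF vS] by blast
    have ne: "lab st j \<noteq> {}" using j by auto
    have fin: "finite (lab st j)" using inv_fin[OF I j(1)] .
    define m where "m = Max (lab st j)"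
    have mj: "m \<in> lab st j" using ne fin m_def by simp
    have vm: "v \<le> m" using fin j(3) m_def by simp
    have "ty B inc m = Diag" using invD(5)[OF I j(1) ne] j(2) m_def by simp
    then have mB: "m \<in> B" using ty_cases by auto
    have mU: "m \<in> U" using inU[OF j(1) mj] .
    have "bl < m" "m \<le> b1" using Bb[OF mB] mU Uiff by auto
    have vU: "v \<in> U" using inU[OF j(1) j(3)] .
    have "\<not> v < bl"
    proof
      assume "v < bl"
      then have "v \<le> bl \<and> bl \<le> m" using \<open>bl < m\<close> by simp
      then have "bl \<in> lab st j" using invD(4)[OF I j(1)] j(3) mj unfolding cvx_def by blast
      then have "bl \<in> U" using inU[OF j(1)] by blast
      then show False using Uiff by simp
    qed
    then show ?thesis using vU Uiff vm \<open>m \<le> b1\<close> by auto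
  qed
  have all: "\<exists>d. v \<in> label_union d st" if "v \<in> U" for v
    using fromU[OF that] luI by blast
  have blb1: "bl \<le> b1" using Bb[OF b1B] by simp
  have dcases: "d = West \<or> d = Diag \<or> d = South" for d by (cases d) auto
  have "label_union West st = {b1+1..N}"
  proof
    show "label_union West st \<subseteq> {b1+1..N}"
    proof
      fix v assume v: "v \<in> label_union West st"
      then obtain j where "j < length st" "v \<in> lab st j" using luD by blast
      then have "v \<in> U" using inU by blast
      then show "v \<in> {b1+1..N}" using W1[OF v] Uiff by simp
    qed
    show "{b1+1..N} \<subseteq> label_union West st"
    proof
      fix v assume v: "v \<in> {b1+1..N}"
      then have "v \<in> U" using Uiff blb1 by simp
      then obtain d where d: "v \<in> label_union d st" using all by blast
      show "v \<in> label_union West st"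
      proof (cases d)
        case West then show ?thesis using d by simp
      next
        case Diag then have "v \<le> b1" using D1 d by blast
        then show ?thesis using v by simp
      next
        case South then have "v < bl" using S1 d by blast
        then show ?thesis using v blb1 by simp
      qed
    qed
  qed
  moreover have "label_union South st = {1..<bl}"
  proof
    show "label_union South st \<subseteq> {1..<bl}"
    proof
      fix v assume v: "v \<in> label_union South st"
      then obtain j where "j < length st" "v \<in> lab st j" using luD by blast
      then have "v \<in> U" using inU by blast
      then show "v \<in> {1..<bl}" using S1[OF v] Uiff by simp
    qed
    show "{1..<bl} \<subseteq> label_union South st"
    proof
      fix v assume v: "v \<in> {1..<bl}"
      then have "v \<in> U" using Uiff blb1 b1N by simp
      then obtain d where d: "v \<in> label_union d st" using all by blast
      show "v \<in> label_union South st"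
      proof (cases d)
        case South then show ?thesis using d by simp
      next
        case Diag then have "bl < v" using D1 d by blast
        then show ?thesis using v by simp
      next
        case West then have "b1 < v" using W1 d by blast
        then show ?thesis using v blb1 by simp
      qed
    qed
  qed
  moreover have "label_union Diag st = {bl+1..b1}"
  proof
    show "label_union Diag st \<subseteq> {bl+1..b1}"
    proof
      fix v assume "v \<in> label_union Diag st"
      then have "bl < v \<and> v \<le> b1" using D1 by blast
      then show "v \<in> {bl+1..b1}" by simp
    qed
    show "{bl+1..b1} \<subseteq> label_union Diag st"
    proof
      fix v assume v: "v \<in> {bl+1..b1}"
      then have "v \<in> U" using Uiff blb1 b1N by simp
      then obtain d where d: "v \<in> label_union d st" using all by blast
      show "v \<in> label_union Diag st"
      proof (cases d)
        case Diag then show ?thesis using d by simp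
      next
        case South then have "v < bl" using S1 d by blast
        then show ?thesis using v by simp
      next
        case West then have "b1 < v" using W1 d by blast
        then show ?thesis using v by simp
      qed
    qed
  qed
  ultimately show ?thesis by blast
qed



lemma sorted_bounds: "sorted_wrt (>) xs \<Longrightarrow> x \<in> set xs \<Longrightarrow> last xs \<le> x \<and> x \<le> (hd xs :: nat)"
proof (induction xs)
  case Nil then show ?case by simp
next
  case (Cons a t)
  have gt: "\<forall>y\<in>set t. a > y" using Cons.prems(1) by simp
  show ?case
  proof (cases "x = a")
    case True
    show ?thesis
    proof (cases "t = []")
      case True then show ?thesis using \<open>x = a\<close> by simp
    next
      case False
      then have "last t \<in> set t" by simp
      then show ?thesis using gt \<open>x = a\<close> False by fastforce
    qed
  next
    case False
    then have xt: "x \<in> set t" using Cons.prems(2) by simp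
    then have tne: "t \<noteq> []" by auto
    have "last t \<le> x \<and> x \<le> hd t" using Cons.IH Cons.prems(1) xt by simp
    moreover have "hd t < a" using gt tne by simp
    ultimately show ?thesis using tne by simp
  qed
qed

lemma distinct_butlast_set: "distinct xs \<Longrightarrow> xs \<noteq> [] \<Longrightarrow> set (butlast xs) = set xs - {last xs}"
proof -
  assume d: "distinct xs" and ne: "xs \<noteq> []"
  have e: "xs = butlast xs @ [last xs]" using ne by simp
  then have "distinct (butlast xs @ [last xs])" using d by simp
  then have "last xs \<notin> set (butlast xs)" by simp
  moreover have "set xs = set (butlast xs) \<union> {last xs}" using e by (metis set_append empty_set list.simps(15))
  ultimately show ?thesis by auto
qed

lemma shape:
  assumes "map fst st = replicate a West @ replicate b Diag @ replicate c South" "j < length st"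
  shows "fst (st ! j) = (if j < a then West else if j < a + b then Diag else South)"
proof -
  have "fst (st ! j) = map fst st ! j" using assms(2) by simp
  also have "\<dots> = (replicate a West @ replicate b Diag @ replicate c South) ! j" using assms(1) by simp
  also have "\<dots> = (if j < a then West else if j < a + b then Diag else South)"
  proof -
    have "length (map fst st) = a + b + c" using assms(1) by simp
    then have "j < a + b + c" using assms(2) by simp
    then show ?thesis by (auto simp: nth_append)
  qed
  finally show ?thesis .
qed



theorem lemma3p4:
  fixes n r :: nat and bs :: "nat list list" and ts :: "nat list"
  assumes "r \<le> n"
    and "bs \<in> assemblees (n + 1) (r + 1)"
    and "is_tiling_order (Xword bs) ts"
  shows "label_union West (fe_run ts (fe_init bs)) = {hd (block_ends bs) + 1 .. n + 1}
       \<and> label_union South (fe_run ts (fe_init bs)) = {1 ..< last (block_ends bs)}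
       \<and> label_union Diag (fe_run ts (fe_init bs)) = {last (block_ends bs) + 1 .. hd (block_ends bs)}"
proof -
  define w where "w = concat bs"
  define es where "es = block_ends bs"
  define B where "B = set es"
  define bl where "bl = last es"
  define b1 where "b1 = hd es"
  define inc where "inc = appears_right_succ w"
  define U where "U = {1..n+1} - {bl}"
  define X where "X = Xword bs"
  define st0 where "st0 = fe_init bs"
  have AA: "length bs = r + 1 \<and> (\<forall>b\<in>set bs. b \<noteq> []) \<and> distinct (concat bs) \<and>
      set (concat bs) = {1..n + 1} \<and> sorted_wrt (>) (map last bs)"
    using assms(2) unfolding assemblees_def by (rule CollectD)
  have lbs: "length bs = r + 1" using AA by (elim conjE)
  have nebs: "\<forall>b\<in>set bs. b \<noteq> []" using AA by (elim conjE)
  have dw: "distinct w" using AA unfolding w_def by (elim conjE)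
  have sw: "set w = {1..n+1}" using AA unfolding w_def by (elim conjE)
  have so: "sorted_wrt (>) es" using AA unfolding es_def block_ends_def by (elim conjE)
  have lw: "length w = n + 1" using distinct_card[OF dw] sw by simp
  have bsne: "bs \<noteq> []" using lbs by auto
  have esne: "es \<noteq> []" using bsne unfolding es_def block_ends_def by simp
  have lastne: "last bs \<noteq> []" using nebs bsne by simp
  have lastw: "last w = bl"
  proof -
    have "concat bs = concat (butlast bs) @ last bs"
      by (subst append_butlast_last_id[OF bsne, symmetric]) simp
    then have "last w = last (last bs)" using lastne unfolding w_def by simp
    moreover have "bl = last (last bs)" unfolding bl_def es_def block_ends_def using bsne by (simp add: last_map)
    ultimately show ?thesis by simp
  qed
  have wne: "w \<noteq> []" using lw by auto
  have wn: "w ! n = bl" using lastw lw last_conv_nth[OF wne] by simp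
  have BW: "B \<subseteq> set w"
  proof
    fix x assume "x \<in> B"
    then obtain b where "b \<in> set bs" "x = last b" unfolding B_def es_def block_ends_def by auto
    then have "x \<in> set b" using nebs by simp
    then show "x \<in> set w" using \<open>b \<in> set bs\<close> unfolding w_def by auto
  qed
  have Bb: "bl \<le> b \<and> b \<le> b1" if "b \<in> B" for b
    using sorted_bounds[OF so] that unfolding B_def bl_def b1_def by blast
  have b1B: "b1 \<in> B" unfolding b1_def B_def using esne by simp
  have "b1 \<in> set w" using b1B BW by blast
  then have b1N: "b1 \<le> n + 1" using sw by simp
  have incN: "Suc c \<le> n + 1" if ic: "inc c" for c
  proof -
    obtain i j where "j < length w" "w ! j = Suc c" using ic unfolding inc_def appears_right_succ_def by blast
    then have "Suc c \<in> set w" by (metis nth_mem)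
    then show ?thesis using sw by simp
  qed
  have incl: "inc c" if "c \<in> U" "Suc c = bl" for c
  proof -
    have "c \<in> set w" using that sw unfolding U_def by auto
    then obtain p where p: "p < length w" "w ! p = c" by (auto simp: in_set_conv_nth)
    have "p \<noteq> n" using p wn that unfolding U_def by auto
    then have "p < n" using p lw by simp
    have "p < n \<and> n < length w \<and> w ! p = c \<and> w ! n = Suc c" using \<open>p < n\<close> p wn that lw by simp
    then show ?thesis unfolding inc_def appears_right_succ_def by blast
  qed
  have lX: "length X = n" unfolding X_def Xword_def using lw unfolding w_def by simp
  have lst0: "length st0 = n" unfolding st0_def fe_init_def se_boundary_def
    using lX lw unfolding X_def w_def by simp
  have tyeq: "dir_of (if is_increase bs c then H else if is_decrease bs c then Z else L) = ty B inc c" for c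
    unfolding ty_def is_increase_def is_decrease_def B_def es_def inc_def w_def by simp
  have nth0: "st0 ! j = (ty B inc (w ! j), {w ! j})" if "j < n" for j
  proof -
    have j1: "j < length (butlast w)" using that lw by simp
    have "X ! j = (if is_increase bs (w ! j) then H else if is_decrease bs (w ! j) then Z else L)"
      unfolding X_def Xword_def using j1 by (simp add: nth_butlast w_def)
    moreover have "st0 ! j = (dir_of (X ! j), {w ! j})"
      unfolding st0_def fe_init_def se_boundary_def using j1 lX that unfolding X_def w_def by (simp add: nth_butlast)
    ultimately show ?thesis using tyeq by simp
  qed
  have wj: "w ! j \<noteq> w ! k" if "j < n + 1" "k < n + 1" "j \<noteq> k" for j k
    using dw that lw by (simp add: nth_eq_iff_index_eq)
  have I0: "finv U B inc st0"
  proof (rule invI)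
    show "finite U" unfolding U_def by simp
    show "(\<Union>j\<in>{..<length st0}. lab st0 j) = U"
    proof (rule set_eqI, rule iffI)
      fix v assume "v \<in> (\<Union>j\<in>{..<length st0}. lab st0 j)"
      then obtain j where j: "j < n" "v = w ! j" using lst0 nth0 by auto
      have "v \<in> set w" using j lw by simp
      moreover have "v \<noteq> bl" using wj[of j n] j wn by simp
      ultimately show "v \<in> U" unfolding U_def using sw by simp
    next
      fix v assume v: "v \<in> U"
      then have "v \<in> set w" unfolding U_def using sw by simp
      then obtain p where p: "p < length w" "w ! p = v" by (auto simp: in_set_conv_nth)
      have "p \<noteq> n" using p v wn unfolding U_def by auto
      then have "p < n" using p lw by simp
      then have "v \<in> lab st0 p" using nth0 p(2) by simp
      then show "v \<in> (\<Union>j\<in>{..<length st0}. lab st0 j)" using \<open>p < n\<close> lst0 by auto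
    qed
    show "lab st0 j \<inter> lab st0 k = {}" if "j < length st0" "k < length st0" "j \<noteq> k" for j k
      using that nth0 wj lst0 by simp
    show "cvx (lab st0 j)" if "j < length st0" for j
      using that nth0 lst0 unfolding cvx_def by simp
    show "fst (st0 ! j) = ty B inc (Max (lab st0 j))" if "j < length st0" "lab st0 j \<noteq> {}" for j
      using that nth0 lst0 by simp
    show "b = Max (lab st0 j)" if "j < length st0" "b \<in> lab st0 j" "b \<in> B" for j b
      using that nth0 lst0 by simp
    show "(j < k \<longleftrightarrow> inc c)" if jk: "j < length st0" "k < length st0" "j \<noteq> k" and
      c: "c \<in> lab st0 j" "Suc c \<in> lab st0 k" "c \<notin> B" for j k c
    proof -
      have cj: "w ! j = c" and ck: "w ! k = Suc c" using c jk nth0 lst0 by auto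
      show ?thesis
      proof
        assume "j < k"
        then have "j < k \<and> k < length w \<and> w ! j = c \<and> w ! k = Suc c" using cj ck jk lst0 lw by simp
        then show "inc c" unfolding inc_def appears_right_succ_def by blast
      next
        assume "inc c"
        then obtain i i' where ii: "i < i'" "i' < length w" "w ! i = c" "w ! i' = Suc c"
          unfolding inc_def appears_right_succ_def by blast
        have jw: "j < length w" and kw: "k < length w" using jk lst0 lw by auto
        have iw: "i < length w" using ii by simp
        have "i = j" using nth_eq_iff_index_eq[OF dw iw jw] ii(3) cj by simp
        moreover have "i' = k" using nth_eq_iff_index_eq[OF dw ii(2) kw] ii(4) ck by simp
        ultimately show "j < k" using ii by simp
      qed
    qed
  qed
  have fst0: "map fst st0 = se_boundary X"
    unfolding st0_def fe_init_def X_def by (rule map_fst_zip) (use lX lw in \<open>simp add: se_boundary_def X_def w_def\<close>)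
  have vs: "valid_swaps ts (map fst st0)" and ap: "apply_swaps ts (map fst st0) = nw_boundary X"
    using assms(3) fst0 unfolding is_tiling_order_def X_def by auto
  define stf where "stf = fe_run ts st0"
  have If: "finv U B inc stf" and mf: "map fst stf = nw_boundary X"
    using run_inv[OF I0 vs] ap unfolding stf_def by auto
  have mf2: "map fst stf = replicate (count_list X Z) West @ replicate (count_list X L) Diag @ replicate (count_list X H) South"
    using mf unfolding nw_boundary_def .
  note sh = shape[OF mf2]
  have sW: "fst (stf ! k) = West" if "j < length stf" "k \<le> j" "fst (stf ! j) = West" for j k
  proof -
    have "j < count_list X Z" using sh[OF that(1)] that(3) by (auto split: if_splits)
    then show ?thesis using sh[of k] that by simp
  qed
  have sS: "fst (stf ! k) = South" if "k < length stf" "j \<le> k" "fst (stf ! j) = South" for j k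
  proof -
    have "\<not> j < count_list X Z + count_list X L" using sh[of j] that by (auto split: if_splits)
    then show ?thesis using sh[OF that(1)] that by simp
  qed
  have "label_union West stf = {b1+1..n+1} \<and> label_union South stf = {1..<bl} \<and> label_union Diag stf = {bl+1..b1}"
    by (rule final[OF If U_def sW sS Bb b1B b1N incN incl]) auto
  then show ?thesis unfolding stf_def st0_def b1_def bl_def es_def .
qed

end
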